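(* Let $g_1,g_2$ be monic divisors of $x^m-1$ over $\mathbb{F}_q$ and $v\in\mathcal{R}$ with $\gcd(v^2-1,x^m-1)=1$, and let $\mathcal{D}_3$ be the QC code of length $2m$ generated by $(g_1,vg_1)$ and $(vg_2,g_2)$. Then $\mathcal{D}_3$ is symplectic dual-containing iff $g_1\mid g_1^{\perp}(v-\overline{v})$, $g_2\mid g_1^{\perp}(1-\overline{v}v)$ and $g_2\mid g_2^{\perp}(\overline{v}-v)$.
   Context: $\mathcal{R}=\mathbb{F}_q[x]/(x^m-1)$, elements identified with representatives of degree $<m$; $[k]=(k_0,\dots,k_{m-1})$; $\overline{k}(x)=k(x^{-1})\bmod(x^m-1)$; $f^*(x)=x^{\deg f}f(1/x)$; for $k\in\mathcal{R}$, $f=\frac{x^m-1}{\gcd(k,x^m-1)}$, $k^{\perp}=f(0)^{-1}f^*$. "$g\mid a$" for $g\mid x^m-1$ means $g$ divides the representative of $a$. The QC code generated by $(u_{i1},u_{i2})$, $i=1,2$, is $\{([r_1u_{11}+r_2u_{21}],[r_1u_{12}+r_2u_{22}]):r_i\in\mathcal{R}\}\subseteq\mathbb{F}_q^{2m}$. Symplectic inner product $\sum_{i=1}^m(u_iv_{m+i}-u_{m+i}v_i)$; dual-containing means $\mathcal{D}_3^{\perp_S}\subseteq\mathcal{D}_3$. *)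

theory Defs
  imports "HOL-Computational_Algebra.Computational_Algebra"
begin

definition xm1 :: "nat \<Rightarrow> 'a::field poly" where
  "xm1 m = monom 1 m - 1"

definition rep :: "nat \<Rightarrow> 'a::field poly \<Rightarrow> 'a poly" where
  "rep m k = k mod xm1 m"

text \<open>The conjugate: k(x^{-1}) mod (x^m - 1).\<close>
definition cbar :: "nat \<Rightarrow> 'a::field poly \<Rightarrow> 'a poly" where
  "cbar m k = rep m (\<Sum>i<m. monom (coeff (rep m k) i) ((m - i) mod m))"

text \<open>k^perp = f(0)^{-1} f^* where f = (x^m-1)/gcd(k, x^m-1); f^* is the reciprocal
  polynomial x^(deg f) f(1/x), i.e. reflect_poly f.\<close>
definition perp :: "nat \<Rightarrow> 'a::field_gcd poly \<Rightarrow> 'a poly" where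
  "perp m k = (let f = xm1 m div gcd (rep m k) (xm1 m)
               in smult (inverse (coeff f 0)) (reflect_poly f))"

definition cvec :: "nat \<Rightarrow> 'a::field poly \<Rightarrow> 'a list" where
  "cvec m k = map (coeff (rep m k)) [0..<m]"

definition qc_code :: "nat \<Rightarrow> 'a::field poly \<Rightarrow> 'a poly \<Rightarrow> 'a poly \<Rightarrow> 'a poly \<Rightarrow> 'a list set" where
  "qc_code m u11 u12 u21 u22 =
     {cvec m (r1 * u11 + r2 * u21) @ cvec m (r1 * u12 + r2 * u22) | r1 r2. True}"

definition symp :: "nat \<Rightarrow> 'a::field list \<Rightarrow> 'a list \<Rightarrow> 'a" where
  "symp m u v = (\<Sum>i<m. u ! i * v ! (m + i) - u ! (m + i) * v ! i)"

definition symp_dual :: "nat \<Rightarrow> 'a::field list set \<Rightarrow> 'a list set" where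
  "symp_dual m C = {u. length u = 2 * m \<and> (\<forall>c\<in>C. symp m u c = 0)}"

definition symp_dual_containing :: "nat \<Rightarrow> 'a::field list set \<Rightarrow> bool" where
  "symp_dual_containing m C \<longleftrightarrow> symp_dual m C \<subseteq> C"

definition rdvd :: "nat \<Rightarrow> 'a::field poly \<Rightarrow> 'a poly \<Rightarrow> bool" where
  "rdvd m g a \<longleftrightarrow> g dvd rep m a"

end

theory Submission
  imports Defs
begin

definition cnj :: "nat \<Rightarrow> 'a::field poly \<Rightarrow> 'a poly" where
  "cnj m p = pcompose p (monom 1 (m - 1))"

definition BB :: "nat \<Rightarrow> 'a::field poly \<Rightarrow> 'a poly \<Rightarrow> 'a" where
  "BB m a d = (\<Sum>i<m. coeff (rep m a) i * coeff (rep m d) i)"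

lemma degree_xm1: "1 \<le> m \<Longrightarrow> degree (xm1 m :: 'a::field poly) = m"
proof -
  assume "1 \<le> m"
  have "degree (monom (1::'a) m + (- 1)) = m"
    using \<open>1 \<le> m\<close> by (subst degree_add_eq_left) (auto simp: degree_monom_eq)
  then show ?thesis unfolding xm1_def by simp
qed

lemma xm1_nz: "1 \<le> m \<Longrightarrow> (xm1 m :: 'a::field poly) \<noteq> 0"
  using degree_xm1[of m] by (metis degree_0 not_one_le_zero)

lemma rep_degree: "1 \<le> m \<Longrightarrow> rep m a = 0 \<or> degree (rep m a) < m"
  unfolding rep_def using degree_mod_less[OF xm1_nz, of m a] degree_xm1[of m] by metis

lemma rep_coeff_high: "1 \<le> m \<Longrightarrow> m \<le> i \<Longrightarrow> coeff (rep m a) i = 0"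
  using rep_degree[of m a] by (metis coeff_0 coeff_eq_0 leD le_less_trans nat_less_le)

lemma rep_small: "1 \<le> m \<Longrightarrow> degree a < m \<Longrightarrow> rep m a = a"
  unfolding rep_def by (simp add: degree_xm1 mod_poly_less)

lemma rep_eq_iff: "rep m a = rep m b \<longleftrightarrow> xm1 m dvd a - b"
  unfolding rep_def by (rule mod_eq_dvd_iff)

lemma rep_add: "rep m (a + b) = rep m a + rep m b"
  unfolding rep_def by (rule poly_mod_add_left)
lemma rep_diff: "rep m (a - b) = rep m a - rep m b"
  unfolding rep_def by (rule poly_mod_diff_left)
lemma rep_smult: "rep m (smult c a) = smult c (rep m a)"
  unfolding rep_def by (rule mod_smult_left)
lemma rep_0[simp]: "rep m 0 = 0" unfolding rep_def by simp
lemma rep_rep[simp]: "rep m (rep m a) = rep m a" unfolding rep_def by simp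

lemma xpow_cong: "xm1 m dvd (monom (1::'a::field) (k + m * j) - monom 1 k)"
proof -
  have "(monom (1::'a) m - 1) dvd (monom 1 m) ^ j - 1"
  proof (induction j)
    case 0 then show ?case by simp
  next
    case (Suc j)
    have "(monom (1::'a) m) ^ Suc j - 1 = monom 1 m * ((monom 1 m) ^ j - 1) + (monom 1 m - 1)"
      by (simp add: algebra_simps)
    then show ?case using Suc by (metis dvd_add dvd_mult dvd_refl)
  qed
  moreover have "monom (1::'a) (k + m * j) - monom 1 k = monom 1 k * ((monom 1 m) ^ j - 1)"
    by (simp add: monom_power algebra_simps mult_monom mult.commute)
  ultimately show ?thesis unfolding xm1_def by (metis dvd_mult)
qed

lemma dvd_diff_trans: "(n::'a::comm_ring_1) dvd a - b \<Longrightarrow> n dvd b - c \<Longrightarrow> n dvd a - c"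
  by (metis diff_add_cancel add_diff_eq dvd_add)

lemma dvd_diff_sym: "(n::'a::comm_ring_1) dvd a - b \<Longrightarrow> n dvd b - a"
  by (metis dvd_minus_iff minus_diff_eq)

lemma dvd_diff_mult: "(n::'a::comm_ring_1) dvd a - b \<Longrightarrow> n dvd c * a - c * b"
  by (metis dvd_mult right_diff_distrib)

lemma dvd_diff_mult2: "(n::'a::comm_ring_1) dvd a - b \<Longrightarrow> n dvd a * c - b * c"
  by (metis dvd_mult2 left_diff_distrib)

lemma dvd_diff_iff: "(n::'a::comm_ring_1) dvd a - b \<Longrightarrow> n dvd a \<longleftrightarrow> n dvd b"
  by (metis diff_add_cancel dvd_add_right_iff dvd_diff)

lemma cnj_add: "cnj m (p + q) = cnj m p + cnj m q" unfolding cnj_def by (rule pcompose_add)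
lemma cnj_diff: "cnj m (p - q) = cnj m p - cnj m q" unfolding cnj_def by (rule pcompose_diff)
lemma cnj_mult: "cnj m (p * q) = cnj m p * cnj m q" unfolding cnj_def by (rule pcompose_mult)
lemma cnj_smult: "cnj m (smult c p) = smult c (cnj m p)" unfolding cnj_def by (rule pcompose_smult)
lemma cnj_1[simp]: "cnj m 1 = 1" unfolding cnj_def by (rule pcompose_1)
lemma cnj_0[simp]: "cnj m 0 = 0" unfolding cnj_def by simp
lemma cnj_const[simp]: "cnj m [:c:] = [:c:]" unfolding cnj_def by simp
lemma cnj_pCons: "cnj m (pCons c p) = [:c:] + monom 1 (m - 1) * cnj m p"
  unfolding cnj_def by (rule pcompose_pCons)

lemma cnj_xpow: "cnj m (monom (1::'a::field) k) = monom 1 ((m - 1) * k)"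
proof (induction k)
  case 0 then show ?case by (simp add: one_pCons[symmetric] monom_0)
next
  case (Suc k)
  have "monom (1::'a) (Suc k) = monom 1 1 * monom 1 k" by (simp add: mult_monom)
  moreover have "cnj m (monom (1::'a) 1) = monom 1 (m - 1)"
    by (simp add: monom_Suc cnj_pCons monom_0)
  ultimately have "cnj m (monom (1::'a) (Suc k)) = monom 1 (m - 1) * monom 1 ((m - 1) * k)"
    using Suc by (simp only: cnj_mult)
  also have "\<dots> = monom 1 ((m - 1) + (m - 1) * k)" by (simp add: mult_monom)
  also have "(m - 1) + (m - 1) * k = (m - 1) * Suc k" by simp
  finally show ?case .
qed

lemma cnj_monom: "cnj m (monom (c::'a::field) k) = monom c ((m - 1) * k)"
proof -
  have "monom c k = smult c (monom 1 k)" by (simp add: smult_monom)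
  then have "cnj m (monom c k) = smult c (monom 1 ((m - 1) * k))" by (simp add: cnj_smult cnj_xpow)
  then show ?thesis by (simp add: smult_monom)
qed

lemma dvd_cnj_xm1: "xm1 m dvd cnj m (xm1 m :: 'a::field poly)"
proof -
  have "cnj m (xm1 m :: 'a poly) = monom 1 (0 + m * (m - 1)) - monom 1 0"
    unfolding xm1_def by (simp add: cnj_diff cnj_xpow monom_0 one_pCons[symmetric] mult.commute)
  then show ?thesis using xpow_cong[of m 0 "m - 1"] by simp
qed

lemma cnj_cong: "xm1 m dvd a - b \<Longrightarrow> xm1 m dvd cnj m a - cnj m (b::'a::field poly)"
proof -
  assume "xm1 m dvd a - b"
  then obtain k where "a - b = xm1 m * k" by (auto elim: dvdE)
  then have "cnj m a - cnj m b = cnj m (xm1 m) * cnj m k" by (metis cnj_diff cnj_mult)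
  then show ?thesis using dvd_cnj_xm1 by (metis dvd_mult2)
qed

lemma pcomp_cong: "(n::'a::field poly) dvd q1 - q2 \<Longrightarrow> n dvd pcompose p q1 - pcompose p q2"
proof (induction p)
  case 0 then show ?case by simp
next
  case (pCons a p)
  have "pcompose (pCons a p) q1 - pcompose (pCons a p) q2
     = q1 * (pcompose p q1 - pcompose p q2) + (q1 - q2) * pcompose p q2"
    by (simp add: pcompose_pCons algebra_simps)
  then show ?case using pCons by (metis dvd_add dvd_mult dvd_mult2)
qed

lemma cnj_cnj: assumes "1 \<le> m" shows "xm1 m dvd cnj m (cnj m z) - (z::'a::field poly)"
proof -
  have "cnj m (cnj m z) = pcompose z (pcompose (monom 1 (m - 1)) (monom 1 (m - 1)))"
    unfolding cnj_def by (simp add: pcompose_assoc)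
  also have "pcompose (monom (1::'a) (m - 1)) (monom 1 (m - 1)) = monom 1 ((m - 1) * (m - 1))"
    using cnj_xpow[of m "m - 1"] unfolding cnj_def .
  finally have e: "cnj m (cnj m z) = pcompose z (monom 1 ((m - 1) * (m - 1)))" .
  have ex: "(m - 1) * (m - 1) + m * 1 = 1 + m * (m - 1)" using assms
    by (cases m) (auto simp: algebra_simps)
  have "xm1 m dvd monom (1::'a) ((m - 1) * (m - 1)) - monom 1 1"
    using xpow_cong[of m "(m - 1) * (m - 1)" 1] xpow_cong[of m 1 "m - 1"] ex
    by (metis dvd_diff_sym dvd_diff_trans)
  then have "xm1 m dvd pcompose z (monom (1::'a) ((m - 1) * (m - 1))) - pcompose z (monom 1 1)"
    by (rule pcomp_cong)
  moreover have "monom (1::'a) 1 = [:0, 1:]" by (simp add: monom_altdef)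
  then have "pcompose z (monom (1::'a) 1) = z" by simp
  ultimately show ?thesis using e by simp
qed

lemma cnj_dvd_iff: assumes "1 \<le> m" shows "xm1 m dvd cnj m z \<longleftrightarrow> xm1 m dvd (z::'a::field poly)"
proof
  assume "xm1 m dvd cnj m z"
  then have "xm1 m dvd cnj m (cnj m z)" using cnj_cong[of m "cnj m z" 0] by simp
  then show "xm1 m dvd z" using cnj_cnj[OF assms, of z] dvd_diff_iff by blast
next
  assume "xm1 m dvd z" then show "xm1 m dvd cnj m z" using cnj_cong[of m z 0] by simp
qed

lemma BB_cong1: "xm1 m dvd a - a' \<Longrightarrow> BB m a d = BB m a' d"
  unfolding BB_def using rep_eq_iff by metis
lemma BB_cong2: "xm1 m dvd d - d' \<Longrightarrow> BB m a d = BB m a d'"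
  unfolding BB_def using rep_eq_iff by metis
lemma BB_sym: "BB m a d = BB m d a"
  unfolding BB_def by (simp add: mult.commute)
lemma BB_add1: "BB m (a + b) d = BB m a d + BB m b d"
  unfolding BB_def by (simp add: rep_add sum.distrib algebra_simps)
lemma BB_diff1: "BB m (a - b) d = BB m a d - BB m b d"
  unfolding BB_def by (simp add: rep_diff sum_subtractf algebra_simps)
lemma BB_smult1: "BB m (smult c a) d = c * BB m a d"
  unfolding BB_def by (simp add: rep_smult sum_distrib_left algebra_simps)
lemma BB_add2: "BB m a (d + e) = BB m a d + BB m a e"
  using BB_add1 BB_sym by metis
lemma BB_diff2: "BB m a (d - e) = BB m a d - BB m a e"
  using BB_diff1 BB_sym by metis
lemma BB_smult2: "BB m a (smult c d) = c * BB m a d"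
  using BB_smult1 BB_sym by metis
lemma BB_01[simp]: "BB m 0 d = 0" unfolding BB_def by simp
lemma BB_02[simp]: "BB m a 0 = 0" unfolding BB_def by simp

lemma rep_xmul:
  assumes m: "1 \<le> m" and i: "i < m"
  shows "coeff (rep m (monom 1 1 * a)) i
         = (if i = 0 then coeff (rep m a) (m - 1) else coeff (rep m (a::'a::field poly)) (i - 1))"
proof -
  define r where "r = rep m a"
  define c where "c = coeff r (m - 1)"
  define p where "p = monom 1 1 * r - smult c (xm1 m)"
  have cx: "coeff (xm1 m :: 'a poly) k = (if k = m then 1 else if k = 0 then -1 else 0)" for k
    using m unfolding xm1_def by (auto simp: coeff_monom)
  have cp: "coeff p k = (if k < 1 then 0 else coeff r (k - 1)) - c * (if k = m then 1 else if k = 0 then -1 else 0)" for k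
    unfolding p_def by (simp add: coeff_monom_mult cx)
  have "degree p \<le> m - 1"
  proof (rule degree_le, intro allI impI)
    fix k assume "m - 1 < k"
    then show "coeff p k = 0"
      using m rep_coeff_high[OF m, of "k - 1" a] unfolding cp r_def c_def
      by (cases "k = m") auto
  qed
  then have dp: "degree p < m" using m by linarith
  have "a - r = xm1 m * (a div xm1 m)" unfolding r_def rep_def
    by (metis add_diff_cancel_right' div_mult_mod_eq mult.commute)
  then have "xm1 m dvd a - r" by simp
  moreover have "monom 1 1 * a - p = monom 1 1 * (a - r) + smult c (xm1 m)"
    unfolding p_def by (simp add: algebra_simps)
  ultimately have "xm1 m dvd monom 1 1 * a - p" by (metis dvd_add dvd_mult dvd_smult dvd_refl)
  then have "rep m (monom 1 1 * a) = rep m p" using rep_eq_iff by blast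
  also have "\<dots> = p" using rep_small[OF m dp] .
  finally have e: "rep m (monom 1 1 * a) = p" .
  show ?thesis unfolding e cp using i m unfolding r_def c_def by auto
qed

lemma BB_shift:
  assumes m: "1 \<le> m"
  shows "BB m (monom 1 1 * a) (monom 1 1 * d) = BB m a (d::'a::field poly)"
proof -
  obtain k where k: "m = Suc k" using m by (cases m) auto
  define g where "g i = coeff (rep m a) i * coeff (rep m d) i" for i
  have "BB m (monom 1 1 * a) (monom 1 1 * d) = (\<Sum>i<Suc k. if i = 0 then g k else g (i - 1))"
    unfolding BB_def g_def k
    by (rule sum.cong) (use rep_xmul[OF m, of _ a] rep_xmul[OF m, of _ d] k in auto)
  also have "\<dots> = g k + (\<Sum>i<k. g i)" by (subst sum.lessThan_Suc_shift) simp
  also have "\<dots> = (\<Sum>i<Suc k. g i)" by simp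
  also have "\<dots> = BB m a d" unfolding BB_def g_def k ..
  finally show ?thesis .
qed

lemma BB_x:
  assumes m: "1 \<le> m"
  shows "BB m (monom 1 1 * y) d = BB m y (monom 1 (m - 1) * (d::'a::field poly))"
proof -
  have "xm1 m dvd monom 1 1 * (monom 1 (m - 1) * d) - d"
  proof -
    have "monom 1 1 * (monom 1 (m - 1) * d) - d = (monom (1::'a) (0 + m * 1) - monom 1 0) * d"
      using m by (simp add: mult_monom algebra_simps monom_0 one_pCons[symmetric])
    then show ?thesis using xpow_cong[of m 0 1] by (metis dvd_mult2)
  qed
  then have "BB m (monom 1 1 * y) d = BB m (monom 1 1 * y) (monom 1 1 * (monom 1 (m - 1) * d))"
    using BB_cong2 by metis
  also have "\<dots> = BB m y (monom 1 (m - 1) * d)" by (rule BB_shift[OF m])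
  finally show ?thesis .
qed

lemma BB_adj:
  assumes m: "1 \<le> m"
  shows "BB m (r * a) d = BB m a (cnj m r * (d::'a::field poly))"
proof (induction r arbitrary: d)
  case 0 then show ?case by simp
next
  case (pCons c r)
  have e1: "pCons c r * a = smult c a + monom 1 1 * (r * a)"
    by (simp add: monom_altdef algebra_simps)
  have e2: "BB m (monom 1 1 * (r * a)) d = BB m (r * a) (monom 1 (m - 1) * d)"
    by (rule BB_x[OF m])
  have e3: "cnj m (pCons c r) * d = smult c d + cnj m r * (monom 1 (m - 1) * d)"
    by (simp add: cnj_pCons algebra_simps)
  have "BB m (pCons c r * a) d = c * BB m a d + BB m (monom 1 1 * (r * a)) d"
    unfolding e1 by (simp only: BB_add1 BB_smult1)
  also have "\<dots> = c * BB m a d + BB m a (cnj m r * (monom 1 (m - 1) * d))"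
    using pCons e2 by simp
  also have "\<dots> = BB m a (cnj m (pCons c r) * d)"
    unfolding e3 by (simp only: BB_add2 BB_smult2)
  finally show ?case .
qed

lemma BB_monom:
  assumes m: "1 \<le> m" and i: "i < m"
  shows "BB m (monom 1 i) X = coeff (rep m (X::'a::field poly)) i"
proof -
  have "rep m (monom (1::'a) i) = monom 1 i" using rep_small[OF m] i
    by (metis degree_monom_le le_less_trans)
  then have "BB m (monom 1 i) X = (\<Sum>j<m. (if i = j then coeff (rep m X) j else 0))"
    unfolding BB_def by (intro sum.cong) (auto simp: coeff_monom)
  also have "\<dots> = coeff (rep m X) i" using i by (simp add: sum.delta)
  finally show ?thesis .
qed

lemma BB_nondeg:
  assumes m: "1 \<le> m" and h: "\<forall>r. BB m r X = 0"
  shows "xm1 m dvd (X::'a::field poly)"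
proof -
  have "rep m X = 0"
  proof (rule poly_eqI)
    fix i show "coeff (rep m X) i = coeff 0 i"
    proof (cases "i < m")
      case True then show ?thesis using BB_monom[OF m True, of X] h by simp
    next
      case False then show ?thesis using rep_coeff_high[OF m] by (simp add: not_less)
    qed
  qed
  then show ?thesis unfolding rep_def by auto
qed

lemma rep_as_sum: assumes m: "1 \<le> m"
  shows "rep m r = (\<Sum>i<m. monom (coeff (rep m (r::'a::field poly)) i) i)"
proof -
  have "degree (rep m r) \<le> m - 1" using rep_degree[OF m, of r] by auto
  then have "(\<Sum>i\<le>m - 1. monom (coeff (rep m r) i) i) = rep m r" by (rule poly_as_sum_of_monoms')
  moreover have "{..m - 1} = {..<m}" using m by auto
  ultimately show ?thesis by simp
qed

lemma dvd_sum_diff: "(\<And>i. i \<in> A \<Longrightarrow> (n::'b::comm_ring_1) dvd f i - g i) \<Longrightarrow> n dvd sum f A - sum g A"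
  by (simp add: sum_subtractf[symmetric] dvd_sum)

lemma cnj_sum: "cnj m (sum f A) = (\<Sum>i\<in>A. cnj m (f i))"
  unfolding cnj_def by (rule pcompose_sum)

lemma cbar_cnj: assumes m: "1 \<le> m"
  shows "xm1 m dvd cbar m r - cnj m (r::'a::field poly)"
proof -
  define S where "S = (\<Sum>i<m. monom (coeff (rep m r) i) ((m - i) mod m))"
  have c1: "xm1 m dvd cbar m r - S"
    using rep_eq_iff[of m "rep m S" S] unfolding S_def cbar_def by simp
  have "cnj m (rep m r) = (\<Sum>i<m. monom (coeff (rep m r) i) ((m - 1) * i))"
    by (subst rep_as_sum[OF m]) (simp add: cnj_sum cnj_monom)
  moreover have "xm1 m dvd S - (\<Sum>i<m. monom (coeff (rep m r) i) ((m - 1) * i))"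
    unfolding S_def
  proof (rule dvd_sum_diff)
    fix i assume i: "i \<in> {..<m}"
    show "xm1 m dvd monom (coeff (rep m r) i) ((m - i) mod m) - monom (coeff (rep m r) i) ((m - 1) * i)"
    proof (cases "i = 0")
      case True then show ?thesis by simp
    next
      case False
      have e: "(m - 1) * i = (m - i) + m * (i - 1)" "(m - i) mod m = m - i"
        using False i by (auto simp: algebra_simps diff_mult_distrib2)
      have "monom (coeff (rep m r) i) ((m - i) mod m) - monom (coeff (rep m r) i) ((m - 1) * i)
         = - smult (coeff (rep m r) i) (monom 1 ((m - i) + m * (i - 1)) - monom 1 (m - i))"
        unfolding e by (simp add: smult_monom algebra_simps smult_diff_right)
      then show ?thesis using xpow_cong[of m "m - i" "i - 1"] by (metis dvd_minus_iff dvd_smult)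
    qed
  qed
  ultimately have c2: "xm1 m dvd S - cnj m (rep m r)" by simp
  have "xm1 m dvd rep m r - r" using rep_eq_iff[of m "rep m r" r] by simp
  then have c3: "xm1 m dvd cnj m (rep m r) - cnj m r" by (rule cnj_cong)
  show ?thesis using c1 c2 c3 dvd_diff_trans by blast
qed

lemma length_cvec[simp]: "length (cvec m a) = m" unfolding cvec_def by simp

lemma cvec_eq: assumes m: "1 \<le> m"
  shows "cvec m a = cvec m b \<longleftrightarrow> xm1 m dvd a - (b::'a::field poly)"
proof
  assume h: "cvec m a = cvec m b"
  have "rep m a = rep m b"
  proof (rule poly_eqI)
    fix i show "coeff (rep m a) i = coeff (rep m b) i"
    proof (cases "i < m")
      case True
      then have "cvec m a ! i = cvec m b ! i" using h by simp
      then show ?thesis using True unfolding cvec_def by simp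
    next
      case False then show ?thesis using rep_coeff_high[OF m, of i a] rep_coeff_high[OF m, of i b] by (simp add: not_less)
    qed
  qed
  then show "xm1 m dvd a - b" using rep_eq_iff by blast
next
  assume "xm1 m dvd a - b"
  then have "rep m a = rep m b" using rep_eq_iff by blast
  then show "cvec m a = cvec m b" unfolding cvec_def by simp
qed

lemma cvec_Poly: assumes m: "1 \<le> m" and l: "length xs = m"
  shows "cvec m (Poly xs :: 'a::field poly) = xs"
proof -
  have "degree (Poly xs :: 'a poly) < m"
  proof -
    have "\<forall>i>m - 1. coeff (Poly xs :: 'a poly) i = 0"
      using l m by (auto simp: nth_default_def)
    then have "degree (Poly xs :: 'a poly) \<le> m - 1" by (rule degree_le)
    then show ?thesis using m by linarith
  qed
  then have "rep m (Poly xs) = (Poly xs :: 'a poly)" by (rule rep_small[OF m])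
  then show ?thesis unfolding cvec_def using l
    by (intro nth_equalityI) (auto simp: nth_default_def)
qed

lemma symp_cvec:
  "symp m (cvec m a @ cvec m b) (cvec m c @ cvec m d) = BB m a d - BB m b (c::'a::field poly)"
  unfolding symp_def BB_def by (simp add: nth_append cvec_def sum_subtractf)

lemma split_list2: assumes m: "1 \<le> m" and l: "length (u::'a::field list) = 2 * m"
  shows "u = cvec m (Poly (take m u)) @ cvec m (Poly (drop m u))"
  using l by (simp add: cvec_Poly[OF m])

lemma coeff_xm1: "1 \<le> m \<Longrightarrow> coeff (xm1 m :: 'a::field poly) k = (if k = m then 1 else if k = 0 then -1 else 0)"
  unfolding xm1_def by (auto simp: coeff_monom)

lemma cong_dvd: "(n::'a::comm_ring_1) dvd a - b \<Longrightarrow> d dvd n \<Longrightarrow> d dvd a \<longleftrightarrow> d dvd b"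
  by (metis dvd_trans dvd_diff_iff)

lemma reflect_cnj: assumes m: "1 \<le> m"
  shows "xm1 m dvd reflect_poly d - monom 1 (degree d) * cnj m (d::'a::field poly)"
proof (induction d)
  case 0 then show ?case by simp
next
  case (pCons c p)
  show ?case
  proof (cases "p = 0")
    case True then show ?thesis by (simp add: monom_0 one_pCons[symmetric])
  next
    case False
    have e1: "reflect_poly (pCons c p) = reflect_poly p + monom c (Suc (degree p))"
      using False by (rule reflect_poly_pCons')
    have e2: "monom 1 (degree (pCons c p)) * cnj m (pCons c p)
        = monom c (Suc (degree p)) + monom 1 (degree p + m * 1) * cnj m p"
    proof -
      have d: "degree (pCons c p) = Suc (degree p)" using False by simp
      have "monom 1 (Suc (degree p)) * cnj m (pCons c p)
          = monom 1 (Suc (degree p)) * monom c 0 + (monom 1 (Suc (degree p)) * monom 1 (m - 1)) * cnj m p"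
        by (simp add: cnj_pCons algebra_simps monom_0)
      also have "\<dots> = monom c (Suc (degree p)) + monom 1 (degree p + m * 1) * cnj m p"
        using m by (simp add: mult_monom)
      finally show ?thesis unfolding d .
    qed
    have "reflect_poly (pCons c p) - monom 1 (degree (pCons c p)) * cnj m (pCons c p)
       = (reflect_poly p - monom 1 (degree p) * cnj m p) - (monom 1 (degree p + m * 1) - monom 1 (degree p)) * cnj m p"
      unfolding e1 e2 by (simp add: algebra_simps)
    then show ?thesis using pCons(2) xpow_cong[of m "degree p" 1]
      by (metis dvd_diff dvd_mult2)
  qed
qed

lemma xunit: "xm1 m dvd monom 1 ((m - 1) * e) * monom 1 e - (1::'a::field poly)" if "1 \<le> m"
proof -
  have "monom 1 ((m - 1) * e) * monom 1 e - (1::'a poly) = monom 1 (0 + m * e) - monom 1 0"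
    using that by (cases m) (simp_all add: mult_monom monom_0 one_pCons[symmetric] algebra_simps)
  then show ?thesis using xpow_cong[of m 0 e] by simp
qed

lemma unit_cancel: assumes m: "1 \<le> m" and "xm1 m dvd monom 1 e * z" shows "xm1 m dvd (z::'a::field poly)"
proof -
  have "xm1 m dvd monom 1 ((m - 1) * e) * (monom 1 e * z)" using assms by simp
  moreover have "xm1 m dvd monom 1 ((m - 1) * e) * (monom 1 e * z) - z"
    using dvd_diff_mult2[OF xunit[OF m, of e], of z] by (simp add: algebra_simps)
  ultimately show ?thesis using dvd_diff_iff by blast
qed

lemma reflect_xm1: assumes m: "1 \<le> m" shows "reflect_poly (xm1 m :: 'a::field poly) = - xm1 m"
  by (rule poly_eqI) (use m in \<open>auto simp: coeff_reflect_poly degree_xm1 coeff_xm1\<close>)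

lemma refl_dvd: assumes m: "1 \<le> m" and d: "d dvd xm1 m" shows "reflect_poly d dvd (xm1 m :: 'a::field poly)"
proof -
  obtain h where "xm1 m = d * h" using d by (auto elim: dvdE)
  then have "reflect_poly (xm1 m) = reflect_poly d * reflect_poly h" by (simp add: reflect_poly_mult)
  then have "- xm1 m = reflect_poly d * reflect_poly h" using reflect_xm1[OF m] by metis
  then have "xm1 m = reflect_poly d * (- reflect_poly h)" by (metis minus_minus mult_minus_right)
  then show ?thesis by simp
qed

lemma RL: assumes m: "1 \<le> m" and d: "d dvd xm1 m"
  shows "d dvd cnj m y \<longleftrightarrow> reflect_poly d dvd (y::'a::field poly)"
proof
  define R where "R = reflect_poly d"
  define e where "e = degree d"
  have K: "xm1 m dvd R - monom 1 e * cnj m d" unfolding R_def e_def by (rule reflect_cnj[OF m])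
  have Rn: "R dvd xm1 m" unfolding R_def by (rule refl_dvd[OF m d])
  {
    assume "d dvd cnj m y"
    then obtain k where k: "cnj m y = d * k" by (auto elim: dvdE)
    have cc: "xm1 m dvd cnj m d * cnj m k - y" using cnj_cnj[OF m, of y] k by (simp add: cnj_mult)
    have "monom 1 e * y - R * cnj m k = - (monom 1 e * (cnj m d * cnj m k - y)) - (R - monom 1 e * cnj m d) * cnj m k"
      by (simp add: algebra_simps)
    then have "xm1 m dvd monom 1 e * y - R * cnj m k" using cc K
      by (metis dvd_diff dvd_minus_iff dvd_mult dvd_mult2)
    then have "R dvd monom 1 e * y - R * cnj m k" using Rn dvd_trans by blast
    then have "R dvd monom 1 e * y" by (metis dvd_diff_iff dvd_diff_sym dvd_triv_left cong_dvd dvd_refl)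
    then have "R dvd monom 1 ((m - 1) * e) * monom 1 e * y" by (simp add: mult.assoc)
    moreover have "xm1 m dvd monom 1 ((m - 1) * e) * monom 1 e * y - y"
      using dvd_diff_mult2[OF xunit[OF m, of e], of y] by simp
    ultimately show "reflect_poly d dvd y" unfolding R_def[symmetric] using cong_dvd[OF _ Rn] by blast
  }
  {
    assume "reflect_poly d dvd y"
    then obtain k where k: "y = R * k" unfolding R_def by (auto elim: dvdE)
    have "xm1 m dvd cnj m R - cnj m (monom 1 e) * cnj m (cnj m d)"
      using cnj_cong[OF K] by (simp add: cnj_mult)
    moreover have "xm1 m dvd cnj m (monom 1 e) * cnj m (cnj m d) - cnj m (monom 1 e) * d"
      by (rule dvd_diff_mult[OF cnj_cnj[OF m]])
    ultimately have "xm1 m dvd cnj m R - cnj m (monom 1 e) * d" by (rule dvd_diff_trans)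
    then have "xm1 m dvd cnj m R * cnj m k - cnj m (monom 1 e) * d * cnj m k"
      by (rule dvd_diff_mult2)
    moreover have "cnj m y = cnj m R * cnj m k" using k by (simp add: cnj_mult)
    ultimately have "xm1 m dvd cnj m y - (cnj m (monom 1 e) * cnj m k) * d"
      by (simp add: algebra_simps)
    then show "d dvd cnj m y" using cong_dvd[OF _ d] by (metis dvd_triv_right)
  }
qed

lemma ann: assumes m: "1 \<le> m" and g: "g dvd xm1 m"
  shows "xm1 m dvd cnj m g * y \<longleftrightarrow> reflect_poly (xm1 m div g) dvd (y::'a::field poly)"
proof -
  define h where "h = xm1 m div g"
  have n: "xm1 m = g * h" unfolding h_def using g by simp
  have g0: "g \<noteq> 0" using g xm1_nz[OF m] by auto
  have hn: "h dvd xm1 m" using n by simp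
  have "xm1 m dvd cnj m g * y \<longleftrightarrow> xm1 m dvd cnj m (cnj m g * y)"
    by (rule cnj_dvd_iff[OF m, symmetric])
  also have "\<dots> \<longleftrightarrow> xm1 m dvd g * cnj m y"
  proof (rule dvd_diff_iff)
    show "xm1 m dvd cnj m (cnj m g * y) - g * cnj m y"
      using dvd_diff_mult2[OF cnj_cnj[OF m, of g], of "cnj m y"] by (simp add: cnj_mult)
  qed
  also have "\<dots> \<longleftrightarrow> h dvd cnj m y" using g0 unfolding n by simp
  also have "\<dots> \<longleftrightarrow> reflect_poly h dvd y" by (rule RL[OF m hn])
  finally show ?thesis unfolding h_def .
qed

lemma GL: assumes m: "1 \<le> m" and g: "g dvd xm1 m"
  shows "g dvd z * reflect_poly k \<longleftrightarrow> xm1 m dvd (xm1 m div g) * z * cnj m (k::'a::field poly)"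
proof -
  define h where "h = xm1 m div g"
  have n: "xm1 m = g * h" unfolding h_def using g by simp
  have h0: "h \<noteq> 0" using n xm1_nz[OF m] by auto
  have "g dvd z * reflect_poly k \<longleftrightarrow> xm1 m dvd h * (z * reflect_poly k)"
    unfolding n using h0 by (simp add: mult.commute[of g h])
  also have "\<dots> \<longleftrightarrow> xm1 m dvd h * z * (monom 1 (degree k) * cnj m k)"
  proof (rule dvd_diff_iff)
    show "xm1 m dvd h * (z * reflect_poly k) - h * z * (monom 1 (degree k) * cnj m k)"
      using dvd_diff_mult[OF reflect_cnj[OF m, of k], of "h * z"] by (simp add: algebra_simps)
  qed
  also have "\<dots> \<longleftrightarrow> xm1 m dvd h * z * cnj m k"
  proof
    assume "xm1 m dvd h * z * (monom 1 (degree k) * cnj m k)"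
    moreover have "h * z * (monom 1 (degree k) * cnj m k) = monom 1 (degree k) * (h * z * cnj m k)"
      by (simp add: ac_simps)
    ultimately show "xm1 m dvd h * z * cnj m k" using unit_cancel[OF m, of "degree k"] by simp
  next
    assume "xm1 m dvd h * z * cnj m k"
    then show "xm1 m dvd h * z * (monom 1 (degree k) * cnj m k)"
      by (metis dvd_mult mult.left_commute)
  qed
  finally show ?thesis unfolding h_def .
qed

lemma perp_eq: assumes m: "1 \<le> m" and mon: "lead_coeff g = 1" and g: "g dvd xm1 m"
  shows "perp m g = smult (inverse (coeff (xm1 m div g) 0)) (reflect_poly (xm1 m div g))"
    and "coeff (xm1 m div g) 0 \<noteq> (0::'a::field_gcd)"
proof -
  have "gcd (rep m g) (xm1 m) = gcd g (xm1 m)" unfolding rep_def by (rule gcd_mod_left[OF xm1_nz[OF m]])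
  also have "\<dots> = normalize g" using g by (rule gcd_proj1_if_dvd)
  also have "\<dots> = g" using mon by (simp add: normalize_poly_def one_pCons[symmetric])
  finally show "perp m g = smult (inverse (coeff (xm1 m div g) 0)) (reflect_poly (xm1 m div g))"
    unfolding perp_def by (simp add: Let_def)
  have "xm1 m = g * (xm1 m div g)" using g by simp
  then have "coeff (xm1 m) 0 = coeff g 0 * coeff (xm1 m div g) 0" by (metis coeff_mult_0)
  moreover have "coeff (xm1 m :: 'a poly) 0 = -1" using m by (simp add: coeff_xm1)
  ultimately show "coeff (xm1 m div g) 0 \<noteq> (0::'a)" by auto
qed

lemma perp_dvd: assumes m: "1 \<le> m" and mon: "lead_coeff g = 1" and g: "g dvd xm1 m"
  shows "perp m g dvd y \<longleftrightarrow> reflect_poly (xm1 m div g) dvd (y::'a::field_gcd poly)"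
  using perp_eq[OF m mon g] by (simp add: smult_dvd_iff)

lemma perp_dvd_n: assumes m: "1 \<le> m" and mon: "lead_coeff g = 1" and g: "g dvd xm1 m"
  shows "perp m g dvd (xm1 m :: 'a::field_gcd poly)"
proof -
  have "xm1 m = g * (xm1 m div g)" using g by simp
  then have "xm1 m div g dvd xm1 m" by (metis dvd_triv_right)
  then show ?thesis using perp_dvd[OF m mon g, of "xm1 m"] refl_dvd[OF m] by blast
qed

lemma rdvd_iff: "g dvd xm1 m \<Longrightarrow> rdvd m g X \<longleftrightarrow> g dvd X"
  unfolding rdvd_def rep_def by (rule dvd_mod_iff)

lemma unit_inv: assumes m: "1 \<le> m" and "gcd (rep m u) (xm1 m) = 1"
  shows "\<exists>w. xm1 m dvd u * w - (1::'a::field_gcd poly)"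
proof -
  have "gcd u (xm1 m) = 1" using assms(2) gcd_mod_left[OF xm1_nz[OF m], of u] unfolding rep_def by simp
  then have "fst (bezout_coefficients u (xm1 m)) * u + snd (bezout_coefficients u (xm1 m)) * xm1 m = 1"
    using bezout_coefficients_fst_snd by metis
  then have "u * fst (bezout_coefficients u (xm1 m)) - 1 = xm1 m * (- snd (bezout_coefficients u (xm1 m)))"
    by (simp add: algebra_simps)
  then show ?thesis by (metis dvd_triv_left)
qed

lemma BBr: assumes m: "1 \<le> m" shows "BB m a (r * y) = BB m r (cnj m y * (a::'a::field poly))"
proof -
  have "BB m a (r * y) = BB m (y * r) a" using BB_sym by (metis mult.commute)
  also have "\<dots> = BB m r (cnj m y * a)" by (rule BB_adj[OF m])
  finally show ?thesis .
qed

lemma symp_code: assumes m: "1 \<le> m"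
  shows "symp m (cvec m a @ cvec m b) (cvec m (r1 * g1 + r2 * (v * g2)) @ cvec m (r1 * (v * g1) + r2 * g2))
    = BB m r1 (cnj m g1 * (cnj m v * a - b)) + BB m r2 (cnj m g2 * (a - cnj m v * (b::'a::field poly)))"
proof -
  have "symp m (cvec m a @ cvec m b) (cvec m (r1 * g1 + r2 * (v * g2)) @ cvec m (r1 * (v * g1) + r2 * g2))
     = BB m a (r1 * (v * g1) + r2 * g2) - BB m b (r1 * g1 + r2 * (v * g2))"
    by (rule symp_cvec)
  also have "\<dots> = BB m r1 (cnj m (v * g1) * a) + BB m r2 (cnj m g2 * a)
       - (BB m r1 (cnj m g1 * b) + BB m r2 (cnj m (v * g2) * b))"
    by (simp only: BB_add2 BBr[OF m, of a r1 "v * g1"] BBr[OF m, of a r2 g2]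
          BBr[OF m, of b r1 g1] BBr[OF m, of b r2 "v * g2"])
  also have "\<dots> = BB m r1 (cnj m (v * g1) * a - cnj m g1 * b) + BB m r2 (cnj m g2 * a - cnj m (v * g2) * b)"
    by (simp only: BB_diff2) simp
  also have "cnj m (v * g1) * a - cnj m g1 * b = cnj m g1 * (cnj m v * a - b)"
    by (simp add: cnj_mult algebra_simps)
  also have "cnj m g2 * a - cnj m (v * g2) * b = cnj m g2 * (a - cnj m v * b)"
    by (simp add: cnj_mult algebra_simps)
  finally show ?thesis .
qed

lemma dual_char:
  assumes m: "1 \<le> m" and mon1: "lead_coeff g1 = 1" and g1: "g1 dvd xm1 m"
    and mon2: "lead_coeff g2 = 1" and g2: "g2 dvd xm1 m"
  shows "(\<forall>c\<in>qc_code m g1 (v * g1) (v * g2) g2. symp m (cvec m a @ cvec m b) c = 0) \<longleftrightarrow>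
     perp m g1 dvd cnj m v * a - b \<and> perp m g2 dvd a - cnj m v * (b::'a::field_gcd poly)"
proof -
  define Z1 where "Z1 = cnj m g1 * (cnj m v * a - b)"
  define Z2 where "Z2 = cnj m g2 * (a - cnj m v * b)"
  have sc: "symp m (cvec m a @ cvec m b) (cvec m (r1 * g1 + r2 * (v * g2)) @ cvec m (r1 * (v * g1) + r2 * g2))
    = BB m r1 Z1 + BB m r2 Z2" for r1 r2
    unfolding Z1_def Z2_def by (rule symp_code[OF m])
  have "(\<forall>c\<in>qc_code m g1 (v * g1) (v * g2) g2. symp m (cvec m a @ cvec m b) c = 0)
     \<longleftrightarrow> (\<forall>r1 r2. BB m r1 Z1 + BB m r2 Z2 = 0)"
  proof
    assume h: "\<forall>c\<in>qc_code m g1 (v * g1) (v * g2) g2. symp m (cvec m a @ cvec m b) c = 0"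
    show "\<forall>r1 r2. BB m r1 Z1 + BB m r2 Z2 = 0"
    proof (intro allI)
      fix r1 r2
      have "cvec m (r1 * g1 + r2 * (v * g2)) @ cvec m (r1 * (v * g1) + r2 * g2) \<in> qc_code m g1 (v * g1) (v * g2) g2"
        unfolding qc_code_def by blast
      then show "BB m r1 Z1 + BB m r2 Z2 = 0" using h sc by metis
    qed
  next
    assume h: "\<forall>r1 r2. BB m r1 Z1 + BB m r2 Z2 = 0"
    show "\<forall>c\<in>qc_code m g1 (v * g1) (v * g2) g2. symp m (cvec m a @ cvec m b) c = 0"
    proof
      fix c assume "c \<in> qc_code m g1 (v * g1) (v * g2) g2"
      then obtain r1 r2 where "c = cvec m (r1 * g1 + r2 * (v * g2)) @ cvec m (r1 * (v * g1) + r2 * g2)"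
        unfolding qc_code_def by blast
      then show "symp m (cvec m a @ cvec m b) c = 0" using h sc by metis
    qed
  qed
  also have "\<dots> \<longleftrightarrow> xm1 m dvd Z1 \<and> xm1 m dvd Z2"
  proof
    assume h: "\<forall>r1 r2. BB m r1 Z1 + BB m r2 Z2 = 0"
    have "\<forall>r. BB m r Z1 = 0" using h by (metis BB_01 add_0_right)
    moreover have "\<forall>r. BB m r Z2 = 0" using h by (metis BB_01 add_0)
    ultimately show "xm1 m dvd Z1 \<and> xm1 m dvd Z2" using BB_nondeg[OF m] by blast
  next
    assume "xm1 m dvd Z1 \<and> xm1 m dvd Z2"
    then have "BB m r Z1 = 0" "BB m r Z2 = 0" for r
      using BB_cong2[of m Z1 0 r] BB_cong2[of m Z2 0 r] by auto
    then show "\<forall>r1 r2. BB m r1 Z1 + BB m r2 Z2 = 0" by simp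
  qed
  also have "\<dots> \<longleftrightarrow> perp m g1 dvd cnj m v * a - b \<and> perp m g2 dvd a - cnj m v * b"
    unfolding Z1_def Z2_def ann[OF m g1] ann[OF m g2] perp_dvd[OF m mon1 g1] perp_dvd[OF m mon2 g2] ..
  finally show ?thesis .
qed

lemma memC:
  assumes m: "1 \<le> m" and g1: "g1 dvd xm1 m" and g2: "g2 dvd xm1 m"
    and w: "xm1 m dvd (1 - v ^ 2) * w - 1"
  shows "cvec m a @ cvec m b \<in> qc_code m g1 (v * g1) (v * g2) g2 \<longleftrightarrow>
     g1 dvd a - v * b \<and> g2 dvd b - v * (a::'a::field poly)"
proof
  assume "cvec m a @ cvec m b \<in> qc_code m g1 (v * g1) (v * g2) g2"
  then obtain r1 r2 where "cvec m a @ cvec m b = cvec m (r1 * g1 + r2 * (v * g2)) @ cvec m (r1 * (v * g1) + r2 * g2)"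
    unfolding qc_code_def by auto
  then have "cvec m a = cvec m (r1 * g1 + r2 * (v * g2))" "cvec m b = cvec m (r1 * (v * g1) + r2 * g2)"
    by (simp_all add: append_eq_append_conv)
  then have d1: "xm1 m dvd a - (r1 * g1 + r2 * (v * g2))" and d2: "xm1 m dvd b - (r1 * (v * g1) + r2 * g2)"
    using cvec_eq[OF m] by blast+
  have "a - v * b = (a - (r1 * g1 + r2 * (v * g2))) - v * (b - (r1 * (v * g1) + r2 * g2)) + g1 * (r1 * (1 - v ^ 2))"
    by (simp add: algebra_simps power2_eq_square)
  moreover have "g1 dvd (a - (r1 * g1 + r2 * (v * g2))) - v * (b - (r1 * (v * g1) + r2 * g2))"
    using d1 d2 g1 by (meson dvd_diff dvd_mult dvd_trans)
  ultimately have "g1 dvd a - v * b" by (metis dvd_add dvd_triv_left)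
  moreover
  have "b - v * a = (b - (r1 * (v * g1) + r2 * g2)) - v * (a - (r1 * g1 + r2 * (v * g2))) + g2 * (r2 * (1 - v ^ 2))"
    by (simp add: algebra_simps power2_eq_square)
  moreover have "g2 dvd (b - (r1 * (v * g1) + r2 * g2)) - v * (a - (r1 * g1 + r2 * (v * g2)))"
    using d1 d2 g2 by (meson dvd_diff dvd_mult dvd_trans)
  ultimately show "g1 dvd a - v * b \<and> g2 dvd b - v * a" by (metis dvd_add dvd_triv_left)
next
  assume "g1 dvd a - v * b \<and> g2 dvd b - v * a"
  then obtain s1 s2 where s1: "a - v * b = g1 * s1" and s2: "b - v * a = g2 * s2" by (auto elim!: dvdE)
  define r1 where "r1 = s1 * w"
  define r2 where "r2 = s2 * w"
  have "r1 * g1 + r2 * (v * g2) = w * ((a - v * b) + v * (b - v * a))"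
    unfolding r1_def r2_def s1 s2 by (simp add: algebra_simps)
  also have "\<dots> = a * ((1 - v ^ 2) * w)" by (simp add: algebra_simps power2_eq_square)
  finally have "a - (r1 * g1 + r2 * (v * g2)) = - (a * ((1 - v ^ 2) * w - 1))" by (simp add: algebra_simps)
  then have "xm1 m dvd a - (r1 * g1 + r2 * (v * g2))" using w by simp
  then have e1: "cvec m a = cvec m (r1 * g1 + r2 * (v * g2))" using cvec_eq[OF m] by blast
  have "r1 * (v * g1) + r2 * g2 = w * (v * (a - v * b) + (b - v * a))"
    unfolding r1_def r2_def s1 s2 by (simp add: algebra_simps)
  also have "\<dots> = b * ((1 - v ^ 2) * w)" by (simp add: algebra_simps power2_eq_square)
  finally have "b - (r1 * (v * g1) + r2 * g2) = - (b * ((1 - v ^ 2) * w - 1))" by (simp add: algebra_simps)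
  then have "xm1 m dvd b - (r1 * (v * g1) + r2 * g2)" using w by simp
  then have e2: "cvec m b = cvec m (r1 * (v * g1) + r2 * g2)" using cvec_eq[OF m] by blast
  show "cvec m a @ cvec m b \<in> qc_code m g1 (v * g1) (v * g2) g2"
    unfolding qc_code_def using e1 e2 by auto
qed

lemma unitD: assumes "(n::'a::comm_ring_1) dvd D * E - 1" and "g dvd n" and "g dvd D * z"
  shows "g dvd z"
proof -
  have "n dvd E * (D * z) - z" using dvd_diff_mult2[OF assms(1), of z] by (simp add: algebra_simps)
  moreover have "g dvd E * (D * z)" using assms(3) by simp
  ultimately show ?thesis using cong_dvd[OF _ assms(2)] by blast
qed

lemma perpR: assumes m: "1 \<le> m" and mon: "lead_coeff g = 1" and g: "g dvd xm1 m"
  shows "g' dvd z * perp m g \<longleftrightarrow> g' dvd z * reflect_poly (xm1 m div (g::'a::field_gcd poly))"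
  using perp_eq[OF m mon g] by (simp add: dvd_smult_iff)

theorem mainTheorem13:
  fixes g1 g2 v :: "'a::{field_gcd, finite} poly" and m :: nat
  assumes "m \<ge> 1"
    and "lead_coeff g1 = 1" and "g1 dvd xm1 m"
    and "lead_coeff g2 = 1" and "g2 dvd xm1 m"
    and "degree v < m"
    and "gcd (rep m (v ^ 2 - 1)) (xm1 m) = 1"
  shows "symp_dual_containing m (qc_code m g1 (v * g1) (v * g2) g2) \<longleftrightarrow>
           rdvd m g1 (perp m g1 * (v - cbar m v)) \<and>
           rdvd m g2 (perp m g1 * (1 - cbar m v * v)) \<and>
           rdvd m g2 (perp m g2 * (cbar m v - v))"
proof -
  note m = assms(1) and mon1 = assms(2) and g1 = assms(3) and mon2 = assms(4) and g2 = assms(5)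
  define n where "n = (xm1 m :: 'a poly)"
  define V where "V = cnj m v"
  define P1 where "P1 = perp m g1"
  define P2 where "P2 = perp m g2"
  define C where "C = qc_code m g1 (v * g1) (v * g2) g2"
  obtain w where w: "n dvd (v ^ 2 - 1) * w - 1"
    using unit_inv[OF m assms(7)] unfolding n_def by blast
  have w': "n dvd (1 - v ^ 2) * (- w) - 1" using w by (simp add: algebra_simps)
  define D where "D = V ^ 2 - 1"
  define E where "E = cnj m w"
  have DE: "n dvd D * E - 1"
  proof -
    have "n dvd cnj m ((v ^ 2 - 1) * w - 1)" using w cnj_dvd_iff[OF m] unfolding n_def by blast
    then show ?thesis unfolding D_def E_def V_def by (simp add: cnj_mult cnj_diff power2_eq_square)
  qed
  have P1n: "P1 dvd n" unfolding P1_def n_def by (rule perp_dvd_n[OF m mon1 g1])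
  have P2n: "P2 dvd n" unfolding P2_def n_def by (rule perp_dvd_n[OF m mon2 g2])
  have g1n: "g1 dvd n" and g2n: "g2 dvd n" using g1 g2 unfolding n_def by auto
  have SDC: "symp_dual_containing m C \<longleftrightarrow>
     (\<forall>a b. P1 dvd V * a - b \<and> P2 dvd a - V * b \<longrightarrow> g1 dvd a - v * b \<and> g2 dvd b - v * a)"
  proof
    assume h: "symp_dual_containing m C"
    show "\<forall>a b. P1 dvd V * a - b \<and> P2 dvd a - V * b \<longrightarrow> g1 dvd a - v * b \<and> g2 dvd b - v * a"
    proof (intro allI impI)
      fix a b assume ab: "P1 dvd V * a - b \<and> P2 dvd a - V * b"
      have "cvec m a @ cvec m b \<in> symp_dual m C"
        unfolding symp_dual_def C_def using dual_char[OF m mon1 g1 mon2 g2, of v a b] ab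
        unfolding P1_def P2_def V_def by simp
      then have "cvec m a @ cvec m b \<in> C" using h unfolding symp_dual_containing_def by blast
      then show "g1 dvd a - v * b \<and> g2 dvd b - v * a"
        unfolding C_def using memC[OF m g1 g2 w'[unfolded n_def]] by blast
    qed
  next
    assume h: "\<forall>a b. P1 dvd V * a - b \<and> P2 dvd a - V * b \<longrightarrow> g1 dvd a - v * b \<and> g2 dvd b - v * a"
    show "symp_dual_containing m C" unfolding symp_dual_containing_def
    proof
      fix u assume u: "u \<in> symp_dual m C"
      define a where "a = (Poly (take m u) :: 'a poly)"
      define b where "b = (Poly (drop m u) :: 'a poly)"
      have ue: "u = cvec m a @ cvec m b" unfolding a_def b_def
        using u split_list2[OF m] unfolding symp_dual_def by blast
      have "P1 dvd V * a - b \<and> P2 dvd a - V * b"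
        using u dual_char[OF m mon1 g1 mon2 g2, of v a b] unfolding ue symp_dual_def C_def P1_def P2_def V_def
        by simp
      then have "g1 dvd a - v * b \<and> g2 dvd b - v * a" using h by blast
      then show "u \<in> C" unfolding ue C_def using memC[OF m g1 g2 w'[unfolded n_def]] by blast
    qed
  qed
  have cb: "n dvd cbar m v - V" unfolding n_def V_def by (rule cbar_cnj[OF m])
  have R1: "rdvd m g1 (perp m g1 * (v - cbar m v)) \<longleftrightarrow> g1 dvd P1 * (v - V)"
  proof -
    have "n dvd P1 * (v - cbar m v) - P1 * (v - V)"
      using dvd_diff_mult[OF dvd_diff_sym[OF cb], of P1] by (simp add: algebra_simps)
    then show ?thesis unfolding rdvd_iff[OF g1] P1_def using cong_dvd[OF _ g1n] by blast
  qed
  have R2: "rdvd m g2 (perp m g1 * (1 - cbar m v * v)) \<longleftrightarrow> g2 dvd P1 * (1 - V * v)"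
  proof -
    have "n dvd P1 * (1 - cbar m v * v) - P1 * (1 - V * v)"
      using dvd_diff_mult[OF cb, of "- P1 * v"] by (simp add: algebra_simps)
    then show ?thesis unfolding rdvd_iff[OF g2] P1_def using cong_dvd[OF _ g2n] by blast
  qed
  have R3: "rdvd m g2 (perp m g2 * (cbar m v - v)) \<longleftrightarrow> g2 dvd P2 * (V - v)"
  proof -
    have "n dvd P2 * (cbar m v - v) - P2 * (V - v)"
      using dvd_diff_mult[OF cb, of P2] by (simp add: algebra_simps)
    then show ?thesis unfolding rdvd_iff[OF g2] P2_def using cong_dvd[OF _ g2n] by blast
  qed
  \<comment> \<open>the hidden fourth condition\<close>
  have C4: "g1 dvd P2 * (1 - V * v)" if c2: "g2 dvd P1 * (1 - V * v)"
  proof -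
    define t where "t = 1 - V * v"
    define h1 where "h1 = n div g1"
    define h2 where "h2 = n div g2"
    have "g2 dvd t * reflect_poly h1"
      using c2 perpR[OF m mon1 g1, of g2 t] unfolding t_def h1_def n_def P1_def by (simp add: mult.commute)
    then have A: "n dvd h2 * t * cnj m h1" using GL[OF m g2] unfolding h2_def h1_def n_def by blast
    have ct: "n dvd cnj m t - t"
    proof -
      have "cnj m t - t = - (V * (cnj m V - v))" unfolding t_def V_def by (simp add: cnj_diff cnj_mult algebra_simps)
      then show ?thesis using cnj_cnj[OF m, of v] unfolding n_def V_def by (metis dvd_minus_iff dvd_mult)
    qed
    have "n dvd cnj m (h1 * t * cnj m h2) - cnj m h1 * t * h2"
    proof -
      have "cnj m (h1 * t * cnj m h2) - cnj m h1 * t * h2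
          = cnj m h1 * (cnj m t - t) * cnj m (cnj m h2) + cnj m h1 * t * (cnj m (cnj m h2) - h2)"
        by (simp add: cnj_mult algebra_simps)
      then show ?thesis using ct cnj_cnj[OF m, of h2] unfolding n_def
        by (metis dvd_add dvd_mult dvd_mult2)
    qed
    moreover have "n dvd cnj m h1 * t * h2" using A by (simp add: ac_simps)
    ultimately have "n dvd cnj m (h1 * t * cnj m h2)" using dvd_diff_iff by blast
    then have "n dvd h1 * t * cnj m h2" using cnj_dvd_iff[OF m] unfolding n_def by blast
    then have "g1 dvd t * reflect_poly h2" using GL[OF m g1] unfolding h2_def h1_def n_def by blast
    then show ?thesis
      using perpR[OF m mon2 g2, of g1 t] unfolding t_def h2_def n_def P2_def by (simp add: mult.commute)
  qed
  have main: "(\<forall>a b. P1 dvd V * a - b \<and> P2 dvd a - V * b \<longrightarrow> g1 dvd a - v * b \<and> g2 dvd b - v * a)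
      \<longleftrightarrow> g1 dvd P1 * (v - V) \<and> g2 dvd P1 * (1 - V * v) \<and> g2 dvd P2 * (V - v)"
  proof
    assume h: "\<forall>a b. P1 dvd V * a - b \<and> P2 dvd a - V * b \<longrightarrow> g1 dvd a - v * b \<and> g2 dvd b - v * a"
    have "P1 dvd V * (E * V * P1) - E * P1 \<and> P2 dvd E * V * P1 - V * (E * P1)"
    proof
      have "V * (E * V * P1) - E * P1 = P1 * (E * D)" unfolding D_def by (simp add: algebra_simps power2_eq_square)
      then show "P1 dvd V * (E * V * P1) - E * P1" by simp
    qed (simp add: algebra_simps)
    then have h1: "g1 dvd E * V * P1 - v * (E * P1) \<and> g2 dvd E * P1 - v * (E * V * P1)" using h by blast
    have "P1 dvd V * (- (E * P2)) - (- (E * V * P2)) \<and> P2 dvd - (E * P2) - V * (- (E * V * P2))"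
    proof
      have "- (E * P2) - V * (- (E * V * P2)) = P2 * (E * D)" unfolding D_def by (simp add: algebra_simps power2_eq_square)
      then show "P2 dvd - (E * P2) - V * (- (E * V * P2))" by simp
    qed (simp add: algebra_simps)
    then have h2: "g2 dvd - (E * V * P2) - v * (- (E * P2))" using h by blast
    have "g1 dvd E * (P1 * (V - v))" using h1 by (simp add: algebra_simps)
    then have "g1 dvd P1 * (V - v)" using unitD[of n E D g1 "P1 * (V - v)"] DE g1n by (simp add: mult.commute)
    then have c1: "g1 dvd P1 * (v - V)" by (metis dvd_minus_iff minus_diff_eq mult_minus_right)
    have "g2 dvd E * (P1 * (1 - V * v))" using h1 by (simp add: algebra_simps)
    then have c2: "g2 dvd P1 * (1 - V * v)" using unitD[of n E D g2 "P1 * (1 - V * v)"] DE g2n by (simp add: mult.commute)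
    have "g2 dvd E * (P2 * (v - V))" using h2 by (simp add: algebra_simps)
    then have "g2 dvd P2 * (v - V)" using unitD[of n E D g2 "P2 * (v - V)"] DE g2n by (simp add: mult.commute)
    then have c3: "g2 dvd P2 * (V - v)" by (metis dvd_minus_iff minus_diff_eq mult_minus_right)
    show "g1 dvd P1 * (v - V) \<and> g2 dvd P1 * (1 - V * v) \<and> g2 dvd P2 * (V - v)" using c1 c2 c3 by blast
  next
    assume c: "g1 dvd P1 * (v - V) \<and> g2 dvd P1 * (1 - V * v) \<and> g2 dvd P2 * (V - v)"
    have c4: "g1 dvd P2 * (1 - V * v)" using C4 c by blast
    show "\<forall>a b. P1 dvd V * a - b \<and> P2 dvd a - V * b \<longrightarrow> g1 dvd a - v * b \<and> g2 dvd b - v * a"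
    proof (intro allI impI)
      fix a b assume "P1 dvd V * a - b \<and> P2 dvd a - V * b"
      then obtain u0 w0 where u0: "V * a - b = P1 * u0" and w0: "a - V * b = P2 * w0" by (auto elim!: dvdE)
      have e1: "D * (a - v * b) = - (P1 * (v - V)) * u0 - (P2 * (1 - V * v)) * w0"
      proof -
        have "D * (a - v * b) = (V - v) * (V * a - b) + (v * V - 1) * (a - V * b)"
          unfolding D_def by (simp add: algebra_simps power2_eq_square)
        then show ?thesis unfolding u0 w0 by (simp add: algebra_simps)
      qed
      have e2: "D * (b - v * a) = (P1 * (1 - V * v)) * u0 - (P2 * (V - v)) * w0"
      proof -
        have "D * (b - v * a) = (1 - v * V) * (V * a - b) + (v - V) * (a - V * b)"
          unfolding D_def by (simp add: algebra_simps power2_eq_square)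
        then show ?thesis unfolding u0 w0 by (simp add: algebra_simps)
      qed
      have "g1 dvd D * (a - v * b)" unfolding e1 using c c4 by (metis dvd_diff dvd_minus_iff dvd_mult2)
      then have "g1 dvd a - v * b" using unitD[OF DE g1n] by blast
      moreover have "g2 dvd D * (b - v * a)" unfolding e2 using c by (metis dvd_diff dvd_mult2)
      then have "g2 dvd b - v * a" using unitD[OF DE g2n] by blast
      ultimately show "g1 dvd a - v * b \<and> g2 dvd b - v * a" by blast
    qed
  qed
  show ?thesis using SDC main R1 R2 R3 unfolding C_def by blast
qed

end
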